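(* Let $(\mathcal{S}_1,\mathcal{S}_2)$ be an $S$-pair, let $A \subseteq S$, $x \in A$, $i \in \{1,2\}$, and let $j \ge 2$ be an integer with $j \le |A|$. Suppose every $j$-element subset of $A$ containing $x$ lies in $\mathcal{S}_i$. Then every $j$-element subset of $A$ lies in $\mathcal{S}_i$, and $A \in \mathcal{S}_i$.
   Context: Let $S$ be a finite nonempty set and $\mathcal{S}_1, \mathcal{S}_2 \subseteq 2^S$. The pair $(\mathcal{S}_1,\mathcal{S}_2)$ is an $S$-pair if: (S1) for $i=1,2$, if $A,B \in \mathcal{S}_i$ with $B \subset A$ and $|A| = |B|+1$, then every $|B|$-element subset of $A$ lies in $\mathcal{S}_i$; (S2) for $i=1,2$, if $A,B \in \mathcal{S}_i$ with $|A|=|B|$ and $|A\cap B| = |A|-1$, then $A\cup B \in \mathcal{S}_i$; (S3) for $i=1,2$, not every singleton $\{s\}$, $s\in S$, lies in $\mathcal{S}_i$, and $S \notin \mathcal{S}_i$; (S4) for $k = 1,\dots,|S|-1$ and $x\in S$, if every $k$-element subset of $S - x$ lies in $\mathcal{S}_1$, then not every $(|S|-k)$-element subset of $S-x$ lies in $\mathcal{S}_2$. *)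

theory Defs
  imports Main
begin

definition S_family_ok :: "'a set \<Rightarrow> 'a set set \<Rightarrow> bool" where
  "S_family_ok S F \<longleftrightarrow>
     F \<subseteq> Pow S \<and>
     (\<forall>A\<in>F. \<forall>B\<in>F. B \<subset> A \<and> card A = card B + 1 \<longrightarrow>
         (\<forall>C. C \<subseteq> A \<and> card C = card B \<longrightarrow> C \<in> F)) \<and>
     (\<forall>A\<in>F. \<forall>B\<in>F. card A = card B \<and> card (A \<inter> B) = card A - 1 \<longrightarrow> A \<union> B \<in> F) \<and>
     \<not> (\<forall>s\<in>S. {s} \<in> F) \<and> S \<notin> F"

definition S_pair :: "'a set \<Rightarrow> 'a set set \<Rightarrow> 'a set set \<Rightarrow> bool" where
  "S_pair S S1 S2 \<longleftrightarrow>
     finite S \<and> S \<noteq> {} \<and> S_family_ok S S1 \<and> S_family_ok S S2 \<and>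
     (\<forall>k x. 1 \<le> k \<and> k \<le> card S - 1 \<and> x \<in> S \<longrightarrow>
        (\<forall>C. C \<subseteq> S - {x} \<and> card C = k \<longrightarrow> C \<in> S1) \<longrightarrow>
        \<not> (\<forall>C. C \<subseteq> S - {x} \<and> card C = card S - k \<longrightarrow> C \<in> S2))"

definition S_pair_fam :: "'a set set \<Rightarrow> 'a set set \<Rightarrow> nat \<Rightarrow> 'a set set" where
  "S_pair_fam S1 S2 i = (if i = 1 then S1 else S2)"

end

theory Submission
  imports Defs
begin

lemma fam_ok: "S_pair S S1 S2 \<Longrightarrow> i \<in> {1,2} \<Longrightarrow> S_family_ok S (S_pair_fam S1 S2 i)"
  unfolding S_pair_def S_pair_fam_def by auto

lemma union_step:
  assumes ok: "S_family_ok S F" and "D1 \<in> F" "D2 \<in> F" "card D1 = card D2"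
    "card (D1 \<inter> D2) = card D1 - 1"
  shows "D1 \<union> D2 \<in> F"
  using assms unfolding S_family_ok_def by blast

lemma sub_step:
  assumes ok: "S_family_ok S F" and "A' \<in> F" "B \<in> F" "B \<subset> A'" "card A' = card B + 1"
    "C \<subseteq> A'" "card C = card B"
  shows "C \<in> F"
  using assms unfolding S_family_ok_def by blast

lemma grow:
  assumes ok: "S_family_ok S F" and fin: "finite A"
    and all: "\<forall>C. C \<subseteq> A \<and> card C = k \<longrightarrow> C \<in> F" and k: "k \<ge> 1"
    and E: "E \<subseteq> A" "card E = Suc k"
  shows "E \<in> F"
proof -
  have fE: "finite E" using E fin finite_subset by blast
  have "E \<noteq> {}" using E by auto
  then obtain y where y: "y \<in> E" by blast
  have cy: "card (E - {y}) = k" using y E fE by simp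
  have "card (E - {y}) \<noteq> 0" using cy k by simp
  then have "E - {y} \<noteq> {}" by (metis card.empty)
  then obtain z where z: "z \<in> E" "z \<noteq> y" by blast
  have cz: "card (E - {z}) = k" using z E fE by simp
  have i: "(E - {y}) \<inter> (E - {z}) = (E - {y}) - {z}" by auto
  have ci: "card ((E - {y}) \<inter> (E - {z})) = k - 1" unfolding i using cy z fE by simp
  have u: "(E - {y}) \<union> (E - {z}) = E" using z by auto
  have "E - {y} \<in> F" using all E cy by blast
  moreover have "E - {z} \<in> F" using all E cz by blast
  ultimately show ?thesis using union_step[OF ok] cy cz ci u by metis
qed

lemma base:
  assumes ok: "S_family_ok S F" and fin: "finite A" and x: "x \<in> A" and j: "j \<ge> 2"
    and all: "\<forall>C. C \<subseteq> A \<and> card C = j \<and> x \<in> C \<longrightarrow> C \<in> F"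
    and C: "C \<subseteq> A" "card C = j"
  shows "C \<in> F"
proof (cases "x \<in> C")
  case True then show ?thesis using all C by blast
next
  case False
  have fC: "finite C" using C fin finite_subset by blast
  have "C \<noteq> {}" using C j by auto
  then obtain y where y: "y \<in> C" by blast
  have cy: "card (C - {y}) = j - 1" using y fC C by simp
  have "card (C - {y}) \<noteq> 0" using cy j by simp
  then have "C - {y} \<noteq> {}" by (metis card.empty)
  then obtain z where z: "z \<in> C" "z \<noteq> y" by blast
  have cz: "card (C - {z}) = j - 1" using z fC C by simp
  define D1 where "D1 = insert x (C - {y})"
  define D2 where "D2 = insert x (C - {z})"
  have c1: "card D1 = j" unfolding D1_def using cy fC False j by simp
  have c2: "card D2 = j" unfolding D2_def using cz fC False j by simp
  have i: "D1 \<inter> D2 = insert x ((C - {y}) - {z})" unfolding D1_def D2_def by auto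
  have ci: "card (D1 \<inter> D2) = j - 1" unfolding i using cy z fC False j by simp
  have u: "D1 \<union> D2 = insert x C" unfolding D1_def D2_def using y z by auto
  have "D1 \<subseteq> A" unfolding D1_def using C x by auto
  then have D1F: "D1 \<in> F" using all c1 unfolding D1_def by blast
  have "D2 \<subseteq> A" unfolding D2_def using C x by auto
  then have D2F: "D2 \<in> F" using all c2 unfolding D2_def by blast
  have UF: "insert x C \<in> F" using union_step[OF ok D1F D2F] c1 c2 ci u by simp
  have cU: "card (insert x C) = card D1 + 1" using c1 C fC False by simp
  have sub: "D1 \<subset> insert x C" unfolding D1_def using y False by auto
  show ?thesis using sub_step[OF ok UF D1F sub cU] C c1 by auto
qed

theorem mainTheorem7:
  fixes S :: "'a set" and S1 S2 :: "'a set set" and A :: "'a set" and x :: 'a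
    and i j :: nat
  assumes "S_pair S S1 S2"
    and "A \<subseteq> S" and "x \<in> A" and "i \<in> {1, 2}"
    and "2 \<le> j" and "j \<le> card A"
    and "\<forall>C. C \<subseteq> A \<and> card C = j \<and> x \<in> C \<longrightarrow> C \<in> S_pair_fam S1 S2 i"
  shows "(\<forall>C. C \<subseteq> A \<and> card C = j \<longrightarrow> C \<in> S_pair_fam S1 S2 i)
         \<and> A \<in> S_pair_fam S1 S2 i"
proof -
  define F where "F = S_pair_fam S1 S2 i"
  have ok: "S_family_ok S F" unfolding F_def using fam_ok assms(1,4) by blast
  have fin: "finite A" using assms(1,2) unfolding S_pair_def using finite_subset by blast
  have b: "\<forall>C. C \<subseteq> A \<and> card C = j \<longrightarrow> C \<in> F"
    using base[OF ok fin assms(3) assms(5)] assms(7) unfolding F_def by blast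
  have "\<forall>C. C \<subseteq> A \<and> card C = n \<longrightarrow> C \<in> F" if "j \<le> n" for n
    using that
  proof (induction n rule: dec_induct)
    case base then show ?case using b by simp
  next
    case (step n)
    show ?case using grow[OF ok fin step.IH] step.hyps assms(5) by auto
  qed
  then have "\<forall>C. C \<subseteq> A \<and> card C = card A \<longrightarrow> C \<in> F" using assms(6) by blast
  then have "A \<in> F" by blast
  then show ?thesis using b unfolding F_def by blast
qed

end
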